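(* Let $f$ be a nontrivial permutation of $\mathbb{F}_q$ whose disjoint cycle decomposition has $t\ge1$ cycles of lengths $s_1,\dots,s_t\ge2$, and let $s:=\sum_{i=1}^t s_i$ and $k:=s+t$. Then $f$ (as a function $\mathbb{F}_q\to\mathbb{F}_q$) can be written as a composition $$f=\mu(x)\circ x^{q-2}\circ(x-a_k)\circ x^{q-2}\circ(x-a_{k-1})\circ\cdots\circ x^{q-2}\circ(x-a_1)$$ with $a_1,\dots,a_k\in\mathbb{F}_q$ and $\mu\in\mathbb{F}_q[x]$ a polynomial of degree one; i.e. $f$ is a composition of $k$ copies of $x^{q-2}$ and $k+1$ degree-one polynomials over $\mathbb{F}_q$. In particular every permutation of $\mathbb{F}_q$ is a composition of $x^{q-2}$ and degree-one polynomials over $\mathbb{F}_q$.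
   Context: Let $q>2$ be a prime power and $\mathbb{F}_q$ the field with $q$ elements. On $\mathbb{F}_q$, $x^{q-2}$ is the map $c\mapsto c^{q-2}$ (so $0\mapsto0$ and $c\mapsto c^{-1}$ for $c\neq0$). Composition is $(f\circ g)(x)=f(g(x))$. *)

theory Defs
  imports "HOL-Combinatorics.Orbits" "HOL-Computational_Algebra.Polynomial"
begin

definition nontriv_cycles :: "('a \<Rightarrow> 'a) \<Rightarrow> 'a set set" where
  "nontriv_cycles f = {orbit f x | x. f x \<noteq> x}"

fun inv_chain :: "nat \<Rightarrow> (nat \<Rightarrow> 'a::field) \<Rightarrow> nat \<Rightarrow> ('a \<Rightarrow> 'a)" where
  "inv_chain e a 0 = id"
| "inv_chain e a (Suc i) = (\<lambda>x. x ^ e) \<circ> (\<lambda>x. x - a (Suc i)) \<circ> inv_chain e a i"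

end

theory Submission
  imports Defs
begin


lemma pow_inv:
  fixes x :: "'a::{finite,field}"
  assumes "card (UNIV::'a set) > 2"
  shows "x ^ (card (UNIV::'a set) - 2) = inverse x"
proof (cases "x = 0")
  case True
  then show ?thesis using assms by (simp add: power_0_left)
next
  case False
  let ?q = "card (UNIV::'a set)"
  have "(\<Prod>y\<in>UNIV-{0}. x * y) = x ^ (?q - 1) * \<Prod>(UNIV-{0::'a})"
    by (simp add: prod.distrib card_Diff_singleton)
  moreover have "(\<Prod>y\<in>UNIV-{0}. x * y) = (\<Prod>y\<in>UNIV-{0::'a}. y)"
    by (rule prod.reindex_bij_witness[of _ "\<lambda>y. y / x" "\<lambda>y. x * y"]) (use False in auto)
  moreover have "\<Prod>(UNIV-{0::'a}) \<noteq> 0" by simp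
  ultimately have 1: "x ^ (?q - 1) = 1" by simp
  have "?q - 1 = Suc (?q - 2)" using assms by simp
  then have "x * x ^ (?q - 2) = 1" using 1 by simp
  then show ?thesis by (metis inverse_unique mult.commute)
qed

lemma chain_Suc: "inv_chain e a (Suc i) x = (inv_chain e a i x - a (Suc i)) ^ e"
  by simp

lemma chain_cong: "(\<forall>i. 0 < i \<and> i \<le> j \<longrightarrow> a i = b i) \<Longrightarrow> inv_chain e a j = inv_chain e b j"
  by (induct j) auto

lemma chain_concat:
  "inv_chain e (\<lambda>i. if i \<le> n then a i else b (i - n)) (m + n) = inv_chain e b m \<circ> inv_chain e a n"
proof (induct m)
  case 0
  then show ?case by (simp add: chain_cong)
next
  case (Suc m)
  have "Suc m + n = Suc (m + n)" by simp
  then show ?case using Suc by (simp add: fun_eq_iff Suc_diff_le)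
qed

lemma chain_affine:
  fixes a :: "nat \<Rightarrow> 'a::field"
  assumes H: "\<And>x::'a. x ^ e = inverse x" and "\<alpha> \<noteq> 0"
  shows "\<exists>a' \<alpha>' \<beta>'. \<alpha>' \<noteq> 0 \<and> (\<forall>z. inv_chain e a m (\<alpha> * z + \<beta>) = \<alpha>' * inv_chain e a' m z + \<beta>')"
proof (induct m)
  case 0
  then show ?case using assms by auto
next
  case (Suc m)
  then obtain a' \<alpha>' \<beta>' where h: "\<alpha>' \<noteq> 0" "\<forall>z. inv_chain e a m (\<alpha> * z + \<beta>) = \<alpha>' * inv_chain e a' m z + \<beta>'"
    by blast
  define a'' where "a'' = a'(Suc m := (a (Suc m) - \<beta>') / \<alpha>')"
  have c: "inv_chain e a'' m = inv_chain e a' m" unfolding a''_def by (rule chain_cong) auto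
  have "\<forall>z. inv_chain e a (Suc m) (\<alpha> * z + \<beta>) = inverse \<alpha>' * inv_chain e a'' (Suc m) z + 0"
  proof
    fix z
    have "inv_chain e a (Suc m) (\<alpha> * z + \<beta>) = inverse (\<alpha>' * inv_chain e a' m z + \<beta>' - a (Suc m))"
      using h by (simp add: H)
    also have "\<alpha>' * inv_chain e a' m z + \<beta>' - a (Suc m) = \<alpha>' * (inv_chain e a' m z - (a (Suc m) - \<beta>') / \<alpha>')"
      using h(1) by (simp add: field_simps)
    moreover have "inv_chain e a'' (Suc m) z = inverse (inv_chain e a' m z - (a (Suc m) - \<beta>') / \<alpha>')"
      by (simp add: H c) (simp add: a''_def)
    ultimately show "inv_chain e a (Suc m) (\<alpha> * z + \<beta>) = inverse \<alpha>' * inv_chain e a'' (Suc m) z + 0"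
      by (simp add: inverse_mult_distrib)
  qed
  then show ?case using h(1) by (intro exI[of _ a''] exI[of _ "inverse \<alpha>'"] exI[of _ 0]) simp
qed


lemma step_alg:
  fixes y cj c' \<alpha> \<beta> :: "'a::field"
  assumes "y \<noteq> cj" "y \<noteq> c'" "cj \<noteq> c'" "\<beta> \<noteq> 0"
  shows "inverse (\<alpha> + \<beta> / (y - cj) - (\<alpha> + \<beta> / (c' - cj)))
         = - ((c' - cj) / \<beta>) + (- ((c' - cj) / \<beta>) * (c' - cj)) / (y - c')"
proof -
  have a: "y - cj \<noteq> 0" "c' - cj \<noteq> 0" "y - c' \<noteq> 0" "c' - y \<noteq> 0" using assms by auto
  have "\<alpha> + \<beta> / (y - cj) - (\<alpha> + \<beta> / (c' - cj)) = \<beta> * (c' - y) / ((y - cj) * (c' - cj))"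
    using a by (simp add: field_simps)
  then have "inverse (\<alpha> + \<beta> / (y - cj) - (\<alpha> + \<beta> / (c' - cj))) = (y - cj) * (c' - cj) / (\<beta> * (c' - y))"
    by simp
  also have "\<dots> = - ((c' - cj) / \<beta>) + (- ((c' - cj) / \<beta>) * (c' - cj)) / (y - c')"
    using a assms(4) by (simp add: field_simps)
  finally show ?thesis .
qed

lemma walk:
  fixes c :: "nat \<Rightarrow> 'a::field"
  assumes H: "\<And>x::'a. x ^ e = inverse x" and inj: "inj_on c {1..s}" and j: "1 \<le> j" "j \<le> s"
  shows "\<exists>a \<alpha> \<beta>. \<beta> \<noteq> 0 \<and> (\<forall>x. x \<notin> c ` {1..j} \<longrightarrow> inv_chain e a j x = \<alpha> + \<beta> / (x - c j))
     \<and> (\<forall>i. 2 \<le> i \<and> i \<le> j \<longrightarrow> inv_chain e a j (c i) = \<alpha> + \<beta> / (c (i - 1) - c j))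
     \<and> inv_chain e a j (c 1) = \<alpha>"
  using j
proof (induct j rule: dec_induct)
  case base
  show ?case
    by (intro exI[of _ "\<lambda>_. c 1"] exI[of _ 0] exI[of _ 1]) (auto simp: H divide_inverse)
next
  case (step j)
  then obtain a \<alpha> \<beta> where h: "\<beta> \<noteq> 0" "\<forall>x. x \<notin> c ` {1..j} \<longrightarrow> inv_chain e a j x = \<alpha> + \<beta> / (x - c j)"
     "\<forall>i. 2 \<le> i \<and> i \<le> j \<longrightarrow> inv_chain e a j (c i) = \<alpha> + \<beta> / (c (i - 1) - c j)"
     "inv_chain e a j (c 1) = \<alpha>" by auto
  define c' where "c' = c (Suc j)"
  define A where "A = \<alpha> + \<beta> / (c' - c j)"
  define D where "D = (c' - c j) / \<beta>"
  define a' where "a' = a(Suc j := A)"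
  have cg: "inv_chain e a' j = inv_chain e a j" unfolding a'_def by (rule chain_cong) auto
  have ev: "inv_chain e a' (Suc j) x = inverse (inv_chain e a j x - A)" for x
    by (simp add: H cg) (simp add: a'_def)
  have injd: "c u = c v \<longleftrightarrow> u = v" if "u \<in> {1..s}" "v \<in> {1..s}" for u v
    using inj that by (auto dest: inj_onD)
  have cjc': "c j \<noteq> c'" unfolding c'_def using injd[of j "Suc j"] step by auto
  have c'n: "c' \<notin> c ` {1..j}" unfolding c'_def using injd step by force
  have D0: "D \<noteq> 0" unfolding D_def using h(1) cjc' by simp
  have gen: "inverse (\<alpha> + \<beta> / (y - c j) - A) = - D + (- D * (c' - c j)) / (y - c')"
    if "y \<noteq> c j" "y \<noteq> c'" for y
    unfolding A_def D_def by (rule step_alg) (use that cjc' h(1) in auto)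
  have P1: "- D * (c' - c j) \<noteq> 0" using D0 cjc' by simp
  have P2: "\<forall>x. x \<notin> c ` {1..Suc j} \<longrightarrow> inv_chain e a' (Suc j) x = - D + - D * (c' - c j) / (x - c (Suc j))"
  proof (intro allI impI)
    fix x assume x: "x \<notin> c ` {1..Suc j}"
    then have "x \<notin> c ` {1..j}" "x \<noteq> c j" "x \<noteq> c'" using step(1) unfolding c'_def by auto
    then show "inv_chain e a' (Suc j) x = - D + - D * (c' - c j) / (x - c (Suc j))"
      using gen h(2) ev unfolding c'_def by simp
  qed
  have P3: "\<forall>i. 2 \<le> i \<and> i \<le> Suc j \<longrightarrow> inv_chain e a' (Suc j) (c i) = - D + - D * (c' - c j) / (c (i - 1) - c (Suc j))"
  proof (intro allI impI)
    fix i assume i: "2 \<le> i \<and> i \<le> Suc j"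
    show "inv_chain e a' (Suc j) (c i) = - D + - D * (c' - c j) / (c (i - 1) - c (Suc j))"
    proof (cases "i = Suc j")
      case True
      have "inv_chain e a j c' = A" using h(2) c'n unfolding A_def by simp
      moreover have "(c' - c j) / (c j - c') = -1" using cjc'
        by (metis divide_minus_left divide_self_if minus_diff_eq right_minus_eq)
      moreover have "- D * (c' - c j) / (c j - c') = - D * ((c' - c j) / (c j - c'))" by simp
      ultimately show ?thesis using True ev unfolding c'_def by simp
    next
      case False
      then have i2: "i \<le> j" using i by simp
      have m: "i - 1 \<in> {1..s}" "j \<in> {1..s}" "Suc j \<in> {1..s}" "i - 1 \<noteq> j" "i - 1 \<noteq> Suc j"
        using i2 i step(1,2) j(2) by auto
      have ne1: "c (i - 1) \<noteq> c j" using injd[OF m(1) m(2)] m(4) by simp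
      have ne2: "c (i - 1) \<noteq> c'" using injd[OF m(1) m(3)] m(5) unfolding c'_def by simp
      show ?thesis using ev h(3) i i2 gen[OF ne1 ne2] unfolding c'_def by simp
    qed
  qed
  have "\<alpha> - A = - (\<beta> / (c' - c j))" unfolding A_def by simp
  then have P4: "inv_chain e a' (Suc j) (c 1) = - D"
    using ev h(4) unfolding D_def by simp
  show ?case using P1 P2 P3 P4 by blast
qed

lemma cycle:
  fixes c :: "nat \<Rightarrow> 'a::field"
  assumes H: "\<And>x::'a. x ^ e = inverse x" and inj: "inj_on c {1..s}" and s: "1 \<le> s"
  shows "\<exists>a \<beta>. \<beta> \<noteq> 0 \<and> (\<forall>x. x \<notin> c ` {1..s} \<longrightarrow> inv_chain e a (Suc s) x = (x - c s) / \<beta>)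
     \<and> (\<forall>i. 2 \<le> i \<and> i \<le> s \<longrightarrow> inv_chain e a (Suc s) (c i) = (c (i - 1) - c s) / \<beta>)
     \<and> inv_chain e a (Suc s) (c 1) = (c s - c s) / \<beta>"
proof -
  obtain a \<alpha> \<beta> where h: "\<beta> \<noteq> 0" "\<forall>x. x \<notin> c ` {1..s} \<longrightarrow> inv_chain e a s x = \<alpha> + \<beta> / (x - c s)"
     "\<forall>i. 2 \<le> i \<and> i \<le> s \<longrightarrow> inv_chain e a s (c i) = \<alpha> + \<beta> / (c (i - 1) - c s)"
     "inv_chain e a s (c 1) = \<alpha>" using walk[OF H inj s order_refl] by blast
  define a' where "a' = a(Suc s := \<alpha>)"
  have cg: "inv_chain e a' s = inv_chain e a s" unfolding a'_def by (rule chain_cong) auto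
  have ev: "inv_chain e a' (Suc s) x = inverse (inv_chain e a s x - \<alpha>)" for x
    by (simp add: H cg) (simp add: a'_def)
  show ?thesis
    by (intro exI[of _ a'] exI[of _ \<beta>]) (use h ev in \<open>auto simp: divide_inverse\<close>)
qed


definition Kc :: "('a \<Rightarrow> 'a) \<Rightarrow> nat" where
  "Kc f = (\<Sum>c\<in>nontriv_cycles f. card c) + card (nontriv_cycles f)"

lemma orbit_same:
  fixes f :: "'a::finite \<Rightarrow> 'a"
  assumes "bij f" "s \<in> orbit f z"
  shows "orbit f s = orbit f z"
proof -
  have p: "permutation f" using assms(1) by (simp add: permutation)
  show ?thesis using orbit_cyclic_eq3[OF cyclic_on_orbit'[OF p] assms(2)] .
qed

lemma self_orbit:
  fixes f :: "'a::finite \<Rightarrow> 'a"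
  assumes "bij f" shows "z \<in> orbit f z"
  using assms by (intro permutation_self_in_orbit) (simp add: permutation)

lemma main_gen:
  fixes f :: "'a::{finite,field} \<Rightarrow> 'a"
  assumes H: "\<And>x::'a. x ^ e = inverse x" and "bij f"
  shows "\<exists>a \<alpha> \<beta>. \<alpha> \<noteq> 0 \<and> (\<forall>z. f z = \<alpha> * inv_chain e a (Kc f) z + \<beta>)"
  using assms(2)
proof (induct "card {x. f x \<noteq> x}" arbitrary: f rule: less_induct)
  case less
  show ?case
  proof (cases "\<forall>x. f x = x")
    case True
    then have "nontriv_cycles f = {}" unfolding nontriv_cycles_def by auto
    then have "Kc f = 0" unfolding Kc_def by simp
    then show ?thesis using True by (intro exI[of _ "\<lambda>_. 0"] exI[of _ 1] exI[of _ 0]) simp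
  next
    case False
    then obtain x where fx: "f x \<noteq> x" by auto
    have bf: "bij f" by fact
    define C where "C = orbit f x"
    have xC: "x \<in> C" unfolding C_def using self_orbit[OF bf] .
    have fC: "f z \<in> C" if "z \<in> C" for z using that unfolding C_def by (rule orbit.step)
    have Cf: "z \<in> C" if "f z \<in> C" for z
    proof -
      have p: "permutation f" using bf by (simp add: permutation)
      have "orbit f (f z) = C" unfolding C_def by (rule orbit_same[OF bf that[unfolded C_def]])
      moreover have "orbit f (f z) = orbit f z" by (rule permutation_orbit_step[OF p])
      ultimately show ?thesis using self_orbit[OF bf, of z] by simp
    qed
    define n where "n = funpow_dist1 f x x"
    define y where "y m = (f ^^ m) x" for m
    have yn: "y n = x" unfolding y_def n_def using funpow_dist1_prop[OF xC[unfolded C_def]] .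
    have yinj: "inj_on y {0..<n}" unfolding y_def n_def using inj_on_funpow_dist1[OF xC[unfolded C_def]] .
    have Cy: "C = y ` {0..<n}" unfolding y_def n_def C_def using orbit_conv_funpow_dist1[OF xC[unfolded C_def]] .
    have cardC: "card C = n" using Cy yinj by (simp add: card_image)
    have n1: "n \<noteq> 1" using yn fx unfolding y_def by auto
    have n0: "n \<noteq> 0" unfolding n_def by simp
    have ysuc: "y (Suc m) = f (y m)" for m unfolding y_def by simp
    define c where "c i = y (n - i)" for i
    have cinj: "inj_on c {1..n}"
    proof (rule inj_onI)
      fix u v assume uv: "u \<in> {1..n}" "v \<in> {1..n}" "c u = c v"
      then have "n - u = n - v" using yinj unfolding c_def by (auto dest: inj_onD)
      then show "u = v" using uv by auto
    qed
    have cimg: "c ` {1..n} = C"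
    proof -
      have "(\<lambda>i. n - i) ` {1..n} = {0..<n}"
      proof (rule set_eqI, rule iffI)
        fix m assume "m \<in> {0..<n}" then show "m \<in> (\<lambda>i. n - i) ` {1..n}"
          by (intro image_eqI[of _ _ "n - m"]) auto
      qed auto
      then show ?thesis unfolding Cy c_def by (metis image_image)
    qed
    have cn: "c n = x" unfolding c_def y_def by simp
    obtain a1 \<beta> where cy: "\<beta> \<noteq> 0" "\<forall>z. z \<notin> c ` {1..n} \<longrightarrow> inv_chain e a1 (Suc n) z = (z - c n) / \<beta>"
       "\<forall>i. 2 \<le> i \<and> i \<le> n \<longrightarrow> inv_chain e a1 (Suc n) (c i) = (c (i - 1) - c n) / \<beta>"
       "inv_chain e a1 (Suc n) (c 1) = (c n - c n) / \<beta>"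
      using cycle[OF H cinj, of ] n0 by (meson less_one linorder_not_le)
    define h where "h z = (if z \<in> C then f z else z)" for z
    have hz: "inv_chain e a1 (Suc n) z = (h z - x) / \<beta>" for z
    proof (cases "z \<in> C")
      case False
      then show ?thesis using cy(2) cimg cn unfolding h_def by simp
    next
      case True
      then obtain i where i: "i \<in> {1..n}" "z = c i" using cimg by auto
      show ?thesis
      proof (cases "i = 1")
        case True
        have sn: "Suc (n - 1) = n" using n0 by simp
        have "f (c 1) = c n" unfolding c_def using ysuc[of "n - 1"] yn sn by (simp add: y_def)
        then show ?thesis using cy(4) i True cn \<open>z \<in> C\<close> unfolding h_def by simp
      next
        case False
        then have "2 \<le> i" "i \<le> n" using i by auto
        moreover have "n - (i - 1) = Suc (n - i)" using \<open>2 \<le> i\<close> \<open>i \<le> n\<close> by simp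
        then have "c (i - 1) = f (c i)" unfolding c_def using ysuc[of "n - i"] by simp
        ultimately show ?thesis using cy(3) i cn \<open>z \<in> C\<close> unfolding h_def by simp
      qed
    qed
    define g where "g z = (if z \<in> C then z else f z)" for z
    have fgh: "f z = g (h z)" for z unfolding g_def h_def using fC by auto
    have ginj: "inj g"
    proof (rule injI)
      fix u v assume e: "g u = g v"
      have injf: "inj f" using bf by (simp add: bij_def)
      show "u = v"
      proof (cases "u \<in> C"; cases "v \<in> C")
        assume "u \<in> C" "v \<in> C" then show ?thesis using e unfolding g_def by simp
      next
        assume "u \<in> C" "v \<notin> C" then have "u = f v" using e unfolding g_def by simp
        then show ?thesis using Cf \<open>u \<in> C\<close> \<open>v \<notin> C\<close> by blast
      next
        assume "u \<notin> C" "v \<in> C" then have "f u = v" using e unfolding g_def by simp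
        then show ?thesis using Cf \<open>v \<in> C\<close> \<open>u \<notin> C\<close> by blast
      next
        assume "u \<notin> C" "v \<notin> C" then have "f u = f v" using e unfolding g_def by simp
        then show ?thesis using injf by (simp add: inj_eq)
      qed
    qed
    have bg: "bij g" using ginj by (simp add: bij_def finite_UNIV_inj_surj)
    have mv: "{z. g z \<noteq> z} \<subset> {z. f z \<noteq> z}" unfolding g_def using xC fx by auto
    have lt: "card {z. g z \<noteq> z} < card {z. f z \<noteq> z}" by (rule psubset_card_mono[OF _ mv]) simp
    obtain a2 \<alpha>2 \<beta>2 where ih: "\<alpha>2 \<noteq> 0" "\<forall>z. g z = \<alpha>2 * inv_chain e a2 (Kc g) z + \<beta>2"
      using less(1)[OF lt bg] by blast
    obtain a' \<alpha>' \<beta>' where af: "\<alpha>' \<noteq> 0" "\<forall>w. inv_chain e a2 (Kc g) (\<beta> * w + x) = \<alpha>' * inv_chain e a' (Kc g) w + \<beta>'"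
      using chain_affine[OF H cy(1)] by blast
    define b where "b i = (if i \<le> Suc n then a1 i else a' (i - Suc n))" for i
    have cat: "inv_chain e b (Kc g + Suc n) = inv_chain e a' (Kc g) \<circ> inv_chain e a1 (Suc n)"
      unfolding b_def by (rule chain_concat)
    have hh: "h z = \<beta> * inv_chain e a1 (Suc n) z + x" for z using hz[of z] cy(1) by simp
    have feq: "f z = (\<alpha>2 * \<alpha>') * inv_chain e b (Kc g + Suc n) z + (\<alpha>2 * \<beta>' + \<beta>2)" for z
    proof -
      have "f z = \<alpha>2 * inv_chain e a2 (Kc g) (\<beta> * inv_chain e a1 (Suc n) z + x) + \<beta>2"
        using fgh[of z] ih(2) hh[of z] by simp
      also have "\<dots> = \<alpha>2 * (\<alpha>' * inv_chain e a' (Kc g) (inv_chain e a1 (Suc n) z) + \<beta>') + \<beta>2"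
        using af(2) by simp
      also have "inv_chain e a' (Kc g) (inv_chain e a1 (Suc n) z) = inv_chain e b (Kc g + Suc n) z"
        using cat by simp
      finally show ?thesis by (simp add: algebra_simps)
    qed
    have orbg: "orbit g z = orbit f z" if "z \<notin> C" for z
    proof (rule orbit_cong[OF self_orbit[OF bf]])
      fix s assume s: "s \<in> orbit f z"
      have "s \<notin> C"
      proof
        assume "s \<in> C"
        then have "orbit f s = C" unfolding C_def using orbit_same[OF bf] by blast
        moreover have "orbit f s = orbit f z" using orbit_same[OF bf s] .
        ultimately show False using that self_orbit[OF bf, of z] by simp
      qed
      then show "g s = f s" unfolding g_def by simp
    qed
    have gz: "g z \<noteq> z \<longleftrightarrow> f z \<noteq> z \<and> z \<notin> C" for z unfolding g_def by simp
    have NCg: "nontriv_cycles g = {orbit f z | z. f z \<noteq> z \<and> z \<notin> C}"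
    proof (rule set_eqI)
      fix W
      show "W \<in> nontriv_cycles g \<longleftrightarrow> W \<in> {orbit f z | z. f z \<noteq> z \<and> z \<notin> C}"
        unfolding nontriv_cycles_def mem_Collect_eq
      proof
        assume "\<exists>z. W = orbit g z \<and> g z \<noteq> z"
        then obtain z where "W = orbit g z" "g z \<noteq> z" by blast
        then show "\<exists>z. W = orbit f z \<and> f z \<noteq> z \<and> z \<notin> C" using gz orbg by metis
      next
        assume "\<exists>z. W = orbit f z \<and> f z \<noteq> z \<and> z \<notin> C"
        then obtain z where "W = orbit f z" "f z \<noteq> z" "z \<notin> C" by blast
        then show "\<exists>z. W = orbit g z \<and> g z \<noteq> z" using gz orbg by metis
      qed
    qed
    have NCf: "nontriv_cycles f = insert C (nontriv_cycles g)"
    proof -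
      have "nontriv_cycles f = {orbit f z | z. f z \<noteq> z \<and> z \<in> C} \<union> {orbit f z | z. f z \<noteq> z \<and> z \<notin> C}"
        unfolding nontriv_cycles_def by auto
      moreover have "{orbit f z | z. f z \<noteq> z \<and> z \<in> C} = {C}"
      proof (rule set_eqI)
        fix W
        show "W \<in> {orbit f z | z. f z \<noteq> z \<and> z \<in> C} \<longleftrightarrow> W \<in> {C}"
        proof
          assume "W \<in> {orbit f z | z. f z \<noteq> z \<and> z \<in> C}"
          then obtain z where "W = orbit f z" "z \<in> C" by blast
          then show "W \<in> {C}" using orbit_same[OF bf, of z x] unfolding C_def by simp
        next
          assume "W \<in> {C}"
          then show "W \<in> {orbit f z | z. f z \<noteq> z \<and> z \<in> C}" using xC fx unfolding C_def by blast
        qed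
      qed
      ultimately show ?thesis using NCg by simp
    qed
    have Cnot: "C \<notin> nontriv_cycles g"
    proof
      assume "C \<in> nontriv_cycles g"
      then obtain z where "C = orbit f z" "z \<notin> C" unfolding NCg by blast
      then show False using self_orbit[OF bf, of z] by simp
    qed
    have "Kc f = Kc g + Suc n"
      unfolding Kc_def NCf using Cnot cardC by simp
    then show ?thesis using feq ih(1) af(1) by (intro exI[of _ b] exI[of _ "\<alpha>2 * \<alpha>'"] exI[of _ "\<alpha>2 * \<beta>' + \<beta>2"]) simp
  qed
qed


theorem mainTheorem10:
  fixes f :: "'a::{finite,field} \<Rightarrow> 'a"
  assumes "card (UNIV::'a set) > 2"
    and "bij f"
    and "f \<noteq> id"
    and "k = (\<Sum>c\<in>nontriv_cycles f. card c) + card (nontriv_cycles f)"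
  shows "\<exists>(a::nat \<Rightarrow> 'a) (\<mu>::'a poly). degree \<mu> = 1 \<and>
           f = poly \<mu> \<circ> inv_chain (card (UNIV::'a set) - 2) a k"
proof -
  have H: "\<And>x::'a. x ^ (card (UNIV::'a set) - 2) = inverse x" using pow_inv[OF assms(1)] .
  obtain a \<alpha> \<beta> where h: "\<alpha> \<noteq> 0" "\<forall>z. f z = \<alpha> * inv_chain (card (UNIV::'a set) - 2) a (Kc f) z + \<beta>"
    using main_gen[OF H assms(2)] by blast
  have kk: "Kc f = k" using assms(4) unfolding Kc_def by simp
  show ?thesis
    using h kk by (intro exI[of _ a] exI[of _ "[:\<beta>, \<alpha>:]"]) (auto simp: fun_eq_iff algebra_simps)
qed

end
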